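(* Let $\mathcal{H}$ be a hypertree, $T$ a host tree of $\mathcal{H}$, and $F$ a subset of $V(\mathcal{H})$ that induces a subtree of every host tree of $\mathcal{H}$ and is not a one-element set. Then: (1) if $uv$ is an edge of $T$ with $\{u,v\}\subseteq F$, then $I_\mathcal{H}(uv)\subseteq F$; (2) $F=\bigcup_{uv\in E(T[F])} I_\mathcal{H}(uv)$, and this union is connected.
   Context: A hypergraph $\mathcal{H}$ has a finite vertex set $V(\mathcal{H})$ and a finite family of nonempty subsets (edges). A host tree of $\mathcal{H}$ is a tree with vertex set $V(\mathcal{H})$ in which every edge of $\mathcal{H}$ induces a connected subgraph; $\mathcal{H}$ is a hypertree if it has a host tree. For $V'\subseteq V(\mathcal{H})$, $I_\mathcal{H}(V')$ is the intersection of all edges of $\mathcal{H}$ containing $V'$, or $V(\mathcal{H})$ if no edge contains $V'$; $I_\mathcal{H}(uv)$ means $I_\mathcal{H}(\{u,v\})$. A union of sets is connected if the intersection graph of the sets is connected. $T[F]$ is the subgraph of $T$ induced by $F$. *)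

theory Defs
  imports Main
begin

definition hypergraph :: "'a set \<Rightarrow> 'a set set \<Rightarrow> bool" where
  "hypergraph V E \<longleftrightarrow> finite V \<and> finite E \<and> (\<forall>e\<in>E. e \<noteq> {} \<and> e \<subseteq> V)"

definition graph :: "'a set \<Rightarrow> 'a set set \<Rightarrow> bool" where
  "graph V ET \<longleftrightarrow> (\<forall>e\<in>ET. \<exists>u v. e = {u, v} \<and> u \<noteq> v \<and> u \<in> V \<and> v \<in> V)"

definition adj_in :: "'a set set \<Rightarrow> 'a set \<Rightarrow> ('a \<times> 'a) set" where
  "adj_in ET S = {(x, y). {x, y} \<in> ET \<and> x \<noteq> y \<and> x \<in> S \<and> y \<in> S}"

definition connected_graph :: "'a set \<Rightarrow> 'a set set \<Rightarrow> bool" where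
  "connected_graph V ET \<longleftrightarrow> (\<forall>u\<in>V. \<forall>v\<in>V. (u, v) \<in> (adj_in ET V)\<^sup>*)"

definition is_cycle :: "'a set set \<Rightarrow> 'a list \<Rightarrow> bool" where
  "is_cycle ET cs \<longleftrightarrow> length cs \<ge> 3 \<and> distinct cs
     \<and> (\<forall>i. Suc i < length cs \<longrightarrow> {cs ! i, cs ! Suc i} \<in> ET)
     \<and> {last cs, hd cs} \<in> ET"

definition acyclic_graph :: "'a set \<Rightarrow> 'a set set \<Rightarrow> bool" where
  "acyclic_graph V ET \<longleftrightarrow> \<not> (\<exists>cs. set cs \<subseteq> V \<and> is_cycle ET cs)"

definition tree :: "'a set \<Rightarrow> 'a set set \<Rightarrow> bool" where
  "tree V ET \<longleftrightarrow> V \<noteq> {} \<and> graph V ET \<and> connected_graph V ET \<and> acyclic_graph V ET"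

definition induced_edges :: "'a set set \<Rightarrow> 'a set \<Rightarrow> 'a set set" where
  "induced_edges ET F = {e \<in> ET. e \<subseteq> F}"

definition host_tree :: "'a set \<Rightarrow> 'a set set \<Rightarrow> 'a set set \<Rightarrow> bool" where
  "host_tree V E ET \<longleftrightarrow> tree V ET \<and> (\<forall>e\<in>E. connected_graph e (induced_edges ET e))"

definition hypertree :: "'a set \<Rightarrow> 'a set set \<Rightarrow> bool" where
  "hypertree V E \<longleftrightarrow> hypergraph V E \<and> (\<exists>ET. host_tree V E ET)"

definition I_H :: "'a set \<Rightarrow> 'a set set \<Rightarrow> 'a set \<Rightarrow> 'a set" where
  "I_H V E V' = (if \<exists>e\<in>E. V' \<subseteq> e then \<Inter>{e \<in> E. V' \<subseteq> e} else V)"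

text \<open>A union of a family of sets is connected if the intersection graph of the family is connected.\<close>
definition connected_union :: "'a set set \<Rightarrow> bool" where
  "connected_union S \<longleftrightarrow>
     (\<forall>A\<in>S. \<forall>B\<in>S. (A, B) \<in> {(X, Y). X \<in> S \<and> Y \<in> S \<and> X \<inter> Y \<noteq> {}}\<^sup>*)"

end

theory Submission
  imports Defs "HOL-Library.Transitive_Closure_Table"
begin

lemma adj_sym: "(a,b) \<in> (adj_in ET S)\<^sup>* \<Longrightarrow> (b,a) \<in> (adj_in ET S)\<^sup>*"
proof (induction rule: rtrancl_induct)
  case base then show ?case by simp
next
  case (step y z)
  have "(z,y) \<in> adj_in ET S" using step(2) by (auto simp: adj_in_def insert_commute)
  then show ?case using step(3) by (rule converse_rtrancl_into_rtrancl)
qed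

lemma adj_mono: "ET \<subseteq> ET' \<Longrightarrow> S \<subseteq> S' \<Longrightarrow> (a,b) \<in> (adj_in ET S)\<^sup>* \<Longrightarrow> (a,b) \<in> (adj_in ET' S')\<^sup>*"
proof -
  assume "ET \<subseteq> ET'" "S \<subseteq> S'"
  then have "adj_in ET S \<subseteq> adj_in ET' S'" by (auto simp: adj_in_def)
  then show "(a,b) \<in> (adj_in ET S)\<^sup>* \<Longrightarrow> (a,b) \<in> (adj_in ET' S')\<^sup>*" using rtrancl_mono by blast
qed

lemma path_split:
  "(a,b) \<in> (adj_in (H \<union> {{x,y}}) S)\<^sup>* \<Longrightarrow> (a,b) \<in> (adj_in H S)\<^sup>* \<or>
    ((a,x) \<in> (adj_in H S)\<^sup>* \<and> (y,b) \<in> (adj_in H S)\<^sup>*) \<or>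
    ((a,y) \<in> (adj_in H S)\<^sup>* \<and> (x,b) \<in> (adj_in H S)\<^sup>*)"
proof (induction rule: rtrancl_induct)
  case base then show ?case by simp
next
  case (step b c)
  show ?case
  proof (cases "{b,c} \<in> H")
    case True
    then have "(b,c) \<in> adj_in H S" using step(2) by (auto simp: adj_in_def)
    then show ?thesis using step(3) by (meson rtrancl.rtrancl_into_rtrancl)
  next
    case False
    then have "{b,c} = {x,y}" using step(2) by (auto simp: adj_in_def)
    then have "(b = x \<and> c = y) \<or> (b = y \<and> c = x)" by (auto simp: doubleton_eq_iff)
    then show ?thesis using step(3) by auto
  qed
qed

lemma memI: "x \<in> X \<Longrightarrow> X \<subseteq> V \<Longrightarrow> x \<in> I_H V E X"
  unfolding I_H_def by auto

lemma I_sub: "hypergraph V E \<Longrightarrow> I_H V E X \<subseteq> V"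
  unfolding I_H_def hypergraph_def by auto

lemma I_in_e: "e \<in> E \<Longrightarrow> X \<subseteq> e \<Longrightarrow> I_H V E X \<subseteq> e"
  unfolding I_H_def by auto

lemma acyc_conv:
  assumes "acyclic_graph V ET" "{a,b} \<in> ET" "a \<noteq> b" "a \<in> V"
    "(a,b) \<in> (adj_in (ET - {{a,b}}) V)\<^sup>*"
  shows False
proof -
  let ?r = "\<lambda>x y. (x,y) \<in> adj_in (ET - {{a,b}}) V"
  have "?r\<^sup>*\<^sup>* a b" using assms(5) by (simp add: rtranclp_rtrancl_eq)
  then obtain xs0 where "rtrancl_path ?r a xs0 b" by (auto simp: rtranclp_eq_rtrancl_path)
  then obtain xs where p: "rtrancl_path ?r a xs b" and d: "distinct (a # xs)"
    by (rule rtrancl_path_distinct)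
  have ne: "xs \<noteq> []" using p assms(3) by (auto elim: rtrancl_path.cases)
  have lst: "last xs = b" using rtrancl_path_last[OF p ne] .
  have nth: "\<And>i. i < length xs \<Longrightarrow> ?r ((a # xs) ! i) (xs ! i)" using rtrancl_path_nth[OF p] by blast
  have "length xs \<noteq> 1"
  proof
    assume "length xs = 1"
    then have "xs = [b]" using lst by (cases xs) auto
    then have "?r a b" using nth[of 0] by simp
    then show False by (auto simp: adj_in_def)
  qed
  moreover have "length xs \<noteq> 0" using ne by simp
  ultimately have len: "length (a # xs) \<ge> 3" by (simp only: length_Cons; linarith)
  have sv: "set xs \<subseteq> V"
  proof
    fix z assume "z \<in> set xs"
    then show "z \<in> V" using rtrancl_path_Range[OF p] by (auto simp: adj_in_def)
  qed
  have cyc: "is_cycle ET (a # xs)"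
    unfolding is_cycle_def
  proof (intro conjI allI impI)
    show "3 \<le> length (a # xs)" by (rule len)
    show "distinct (a # xs)" by (rule d)
    fix i assume "Suc i < length (a # xs)"
    then have "?r ((a # xs) ! i) (xs ! i)" using nth by simp
    then show "{(a # xs) ! i, (a # xs) ! Suc i} \<in> ET" by (auto simp: adj_in_def)
  next
    show "{last (a # xs), hd (a # xs)} \<in> ET" using lst ne assms(2) by (simp add: insert_commute)
  qed
  moreover have "set (a # xs) \<subseteq> V" using sv assms(4) by simp
  ultimately show False using assms(1) unfolding acyclic_graph_def by blast
qed

lemma acyc_fwd:
  assumes "is_cycle ET cs" "set cs \<subseteq> V"
  shows "\<exists>a b. {a,b} \<in> ET \<and> a \<noteq> b \<and> (a,b) \<in> (adj_in (ET - {{a,b}}) V)\<^sup>*"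
proof -
  let ?n = "length cs"
  let ?a = "last cs" let ?b = "hd cs"
  have len: "?n \<ge> 3" and d: "distinct cs" and ed: "\<And>i. Suc i < ?n \<Longrightarrow> {cs ! i, cs ! Suc i} \<in> ET"
    and la: "{?a, ?b} \<in> ET" using assms(1) unfolding is_cycle_def by auto
  have ne: "cs \<noteq> []" using len by auto
  have a_eq: "?a = cs ! (?n - 1)" using ne by (simp add: last_conv_nth)
  have b_eq: "?b = cs ! 0" using ne by (simp add: hd_conv_nth)
  have i1: "?n - 1 < ?n" "0 < ?n" "?n - 1 \<noteq> 0" using len by auto
  have ab: "?a \<noteq> ?b" unfolding a_eq b_eq using nth_eq_iff_index_eq[OF d i1(1) i1(2)] i1(3) by simp
  have "\<forall>k. k < ?n \<longrightarrow> (cs ! 0, cs ! k) \<in> (adj_in (ET - {{?a,?b}}) V)\<^sup>*"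
  proof (intro allI)
    fix k show "k < ?n \<longrightarrow> (cs ! 0, cs ! k) \<in> (adj_in (ET - {{?a,?b}}) V)\<^sup>*"
    proof (induction k)
      case 0 then show ?case by simp
    next
      case (Suc k)
      show ?case
      proof
        assume sk: "Suc k < ?n"
        have neq: "{cs ! k, cs ! Suc k} \<noteq> {?a, ?b}"
        proof
          assume "{cs ! k, cs ! Suc k} = {?a, ?b}"
          then have "(cs ! k = ?a \<and> cs ! Suc k = ?b) \<or> (cs ! k = ?b \<and> cs ! Suc k = ?a)"
            by (auto simp: doubleton_eq_iff)
          moreover have "k < ?n" using sk by simp
          moreover note e1 = nth_eq_iff_index_eq[OF d \<open>k < ?n\<close> i1(1)]
          moreover note e2 = nth_eq_iff_index_eq[OF d \<open>k < ?n\<close> i1(2)]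
          moreover note e3 = nth_eq_iff_index_eq[OF d sk i1(1)]
          ultimately show False
          proof (elim disjE conjE)
            assume "cs ! k = ?a" then have "k = ?n - 1" using e1 a_eq by metis
            then show False using sk by linarith
          next
            assume "cs ! k = ?b" "cs ! Suc k = ?a"
            then have "k = 0" "Suc k = ?n - 1" using e2 e3 a_eq b_eq by metis+
            then show False using len by linarith
          qed
        qed
        have "cs ! k \<noteq> cs ! Suc k" using d sk by (simp add: nth_eq_iff_index_eq)
        moreover have "cs ! k \<in> V" "cs ! Suc k \<in> V" using assms(2) sk by auto
        ultimately have "(cs ! k, cs ! Suc k) \<in> adj_in (ET - {{?a,?b}}) V"
          using ed[OF sk] neq by (auto simp: adj_in_def)
        moreover have "(cs ! 0, cs ! k) \<in> (adj_in (ET - {{?a,?b}}) V)\<^sup>*" using Suc sk by simp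
        ultimately show "(cs ! 0, cs ! Suc k) \<in> (adj_in (ET - {{?a,?b}}) V)\<^sup>*" by simp
      qed
    qed
  qed
  then have "(?b, ?a) \<in> (adj_in (ET - {{?a,?b}}) V)\<^sup>*" using a_eq b_eq len by simp
  then have "(?a, ?b) \<in> (adj_in (ET - {{?a,?b}}) V)\<^sup>*" by (rule adj_sym)
  then show ?thesis using la ab by blast
qed


lemma forest_sub:
  assumes "acyclic_graph V ET" "ET' \<subseteq> ET"
  shows "acyclic_graph V ET'"
  using assms unfolding acyclic_graph_def is_cycle_def by blast

lemma key:
  assumes hg: "hypergraph V E" and ht: "host_tree V E T" and FV: "F \<subseteq> V"
    and all: "\<forall>T'. host_tree V E T' \<longrightarrow> tree F (induced_edges T' F)"
    and uv: "{u,v} \<in> T" and uF: "u \<in> F" and vF: "v \<in> F"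
    and wI: "w \<in> I_H V E {u,v}" and wF: "w \<notin> F"
    and vw: "(v,w) \<in> (adj_in (T - {{u,v}}) V)\<^sup>*"
  shows False
proof -
  define T0 where "T0 = T - {{u,v}}"
  define T' where "T' = T0 \<union> {{u,w}}"
  have tr: "tree V T" using ht unfolding host_tree_def by simp
  have gT: "graph V T" and cT: "connected_graph V T" and aT: "acyclic_graph V T" and Vne: "V \<noteq> {}"
    using tr unfolding tree_def by auto
  have uV: "u \<in> V" and vV: "v \<in> V" using uF vF FV by auto
  have wV: "w \<in> V" using wI I_sub[OF hg] by auto
  have uw: "u \<noteq> w" using uF wF by auto
  have uvne: "u \<noteq> v" using gT uv unfolding graph_def by (auto simp: doubleton_eq_iff)
  have T0T: "T0 \<subseteq> T" unfolding T0_def by auto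
  have T0T': "T0 \<subseteq> T'" unfolding T'_def by auto
  have Tsplit: "T = T0 \<union> {{u,v}}" unfolding T0_def using uv by auto
  have notuv: "(u,v) \<notin> (adj_in T0 V)\<^sup>*"
    using acyc_conv[OF aT uv uvne uV] unfolding T0_def by blast
  have uw_not: "(u,w) \<notin> (adj_in T0 V)\<^sup>*"
  proof
    assume "(u,w) \<in> (adj_in T0 V)\<^sup>*"
    moreover have "(w,v) \<in> (adj_in T0 V)\<^sup>*" using adj_sym[OF vw] unfolding T0_def .
    ultimately show False using notuv by (meson rtrancl_trans)
  qed
  have uw_adj: "(u,w) \<in> adj_in T' V" "(w,u) \<in> adj_in T' V"
    using uV wV uw unfolding T'_def adj_in_def by (auto simp: insert_commute)
  have comp: "\<And>x. x \<in> V \<Longrightarrow> (u,x) \<in> (adj_in T0 V)\<^sup>* \<or> (v,x) \<in> (adj_in T0 V)\<^sup>*"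
  proof -
    fix x assume "x \<in> V"
    then have "(u,x) \<in> (adj_in (T0 \<union> {{u,v}}) V)\<^sup>*" using cT uV Tsplit unfolding connected_graph_def by auto
    from path_split[OF this] show "(u,x) \<in> (adj_in T0 V)\<^sup>* \<or> (v,x) \<in> (adj_in T0 V)\<^sup>*" by auto
  qed
  have graphT': "graph V T'" using gT uV wV uw unfolding T'_def T0_def graph_def by auto
  have conT': "connected_graph V T'"
  proof -
    have reach: "(u,x) \<in> (adj_in T' V)\<^sup>*" if "x \<in> V" for x
    proof -
      from comp[OF that] show ?thesis
      proof
        assume "(u,x) \<in> (adj_in T0 V)\<^sup>*" then show ?thesis using adj_mono[OF T0T'] by blast
      next
        assume vx: "(v,x) \<in> (adj_in T0 V)\<^sup>*"
        have "(w,v) \<in> (adj_in T0 V)\<^sup>*" using adj_sym[OF vw] unfolding T0_def .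
        then have "(w,x) \<in> (adj_in T0 V)\<^sup>*" using vx by simp
        then have "(w,x) \<in> (adj_in T' V)\<^sup>*" using adj_mono[OF T0T'] by blast
        then show ?thesis using uw_adj(1) by (meson converse_rtrancl_into_rtrancl)
      qed
    qed
    show ?thesis unfolding connected_graph_def
      using reach adj_sym by (meson rtrancl_trans)
  qed
  have aT0: "acyclic_graph V T0" using forest_sub[OF aT T0T] .
  have acT': "acyclic_graph V T'"
  proof (rule ccontr)
    assume "\<not> acyclic_graph V T'"
    then obtain cs where "set cs \<subseteq> V" "is_cycle T' cs" unfolding acyclic_graph_def by auto
    from acyc_fwd[OF this(2) this(1)] obtain a b where ab: "{a,b} \<in> T'" "a \<noteq> b"
      "(a,b) \<in> (adj_in (T' - {{a,b}}) V)\<^sup>*" by blast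
    show False
    proof (cases "{a,b} = {u,w}")
      case True
      have "T' - {{a,b}} \<subseteq> T0" unfolding True T'_def by blast
      then have "(a,b) \<in> (adj_in T0 V)\<^sup>*" using adj_mono[OF _ subset_refl ab(3)] by blast
      moreover have "(b,a) \<in> (adj_in T0 V)\<^sup>*" using adj_sym[OF calculation] .
      moreover have "(a = u \<and> b = w) \<or> (a = w \<and> b = u)" using True by (simp add: doubleton_eq_iff)
      ultimately show False using uw_not by blast
    next
      case False
      then have abT0: "{a,b} \<in> T0" using ab(1) unfolding T'_def by blast
      have aV: "a \<in> V" "b \<in> V" using graphT' ab(1) unfolding graph_def by (auto simp: doubleton_eq_iff)
      have "T' - {{a,b}} = (T0 - {{a,b}}) \<union> {{u,w}}" using False unfolding T'_def by blast
      then have "(a,b) \<in> (adj_in ((T0 - {{a,b}}) \<union> {{u,w}}) V)\<^sup>*" using ab(3) by simp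
      from path_split[OF this] show False
      proof (elim disjE conjE)
        assume "(a,b) \<in> (adj_in (T0 - {{a,b}}) V)\<^sup>*"
        then show False using acyc_conv[OF aT0 abT0 ab(2) aV(1)] by blast
      next
        assume h: "(a,u) \<in> (adj_in (T0 - {{a,b}}) V)\<^sup>*" "(w,b) \<in> (adj_in (T0 - {{a,b}}) V)\<^sup>*"
        have "(u,a) \<in> (adj_in T0 V)\<^sup>*" using adj_mono[OF Diff_subset subset_refl adj_sym[OF h(1)]] .
        moreover have "(a,b) \<in> adj_in T0 V" using abT0 ab(2) aV unfolding adj_in_def by auto
        moreover have "(b,w) \<in> (adj_in T0 V)\<^sup>*" using adj_mono[OF Diff_subset subset_refl adj_sym[OF h(2)]] .
        ultimately have "(u,w) \<in> (adj_in T0 V)\<^sup>*" by (meson rtrancl_into_rtrancl rtrancl_trans)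
        then show False using uw_not by simp
      next
        assume h: "(a,w) \<in> (adj_in (T0 - {{a,b}}) V)\<^sup>*" "(u,b) \<in> (adj_in (T0 - {{a,b}}) V)\<^sup>*"
        have "(w,a) \<in> (adj_in T0 V)\<^sup>*" using adj_mono[OF Diff_subset subset_refl adj_sym[OF h(1)]] .
        moreover have "(a,b) \<in> adj_in T0 V" using abT0 ab(2) aV unfolding adj_in_def by auto
        moreover have "(b,u) \<in> (adj_in T0 V)\<^sup>*" using adj_mono[OF Diff_subset subset_refl adj_sym[OF h(2)]] .
        ultimately have "(w,u) \<in> (adj_in T0 V)\<^sup>*" by (meson rtrancl_into_rtrancl rtrancl_trans)
        from adj_sym[OF this] show False using uw_not by blast
      qed
    qed
  qed
  have hyp: "\<forall>e\<in>E. connected_graph e (induced_edges T' e)"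
  proof
    fix e assume eE: "e \<in> E"
    have ce: "connected_graph e (induced_edges T e)" using ht eE unfolding host_tree_def by auto
    show "connected_graph e (induced_edges T' e)"
    proof (cases "{u,v} \<subseteq> e")
      case False
      have sub: "induced_edges T e \<subseteq> induced_edges T' e"
        using False unfolding induced_edges_def T'_def T0_def by auto
      show ?thesis using ce adj_mono[OF sub subset_refl] unfolding connected_graph_def by blast
    next
      case True
      have we: "w \<in> e" using wI I_in_e[OF eE True] by auto
      define H where "H = induced_edges T e - {{u,v}}"
      have HT': "H \<subseteq> induced_edges T' e" unfolding H_def induced_edges_def T'_def T0_def by auto
      have HT0: "H \<subseteq> T0" unfolding H_def induced_edges_def T0_def by auto
      have eV: "e \<subseteq> V" using hg eE unfolding hypergraph_def by auto
      have Hs: "induced_edges T e = H \<union> {{u,v}}" unfolding H_def induced_edges_def using True uv by auto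
      have ue: "u \<in> e" "v \<in> e" using True by auto
      have "(v,w) \<in> (adj_in (H \<union> {{u,v}}) e)\<^sup>*" using ce ue we Hs unfolding connected_graph_def by auto
      from path_split[OF this] have vwH: "(v,w) \<in> (adj_in H e)\<^sup>*"
      proof (elim disjE conjE)
        assume "(v,v) \<in> (adj_in H e)\<^sup>*" "(u,w) \<in> (adj_in H e)\<^sup>*"
        then have "(u,w) \<in> (adj_in T0 V)\<^sup>*" using adj_mono[OF HT0 eV] by blast
        then show ?thesis using uw_not by simp
      qed auto
      have uwe: "(u,w) \<in> adj_in (induced_edges T' e) e"
        using ue we uw unfolding adj_in_def induced_edges_def T'_def by auto
      have vu: "(v,u) \<in> (adj_in (induced_edges T' e) e)\<^sup>*"
      proof -
        have "(v,w) \<in> (adj_in (induced_edges T' e) e)\<^sup>*" using adj_mono[OF HT' _ vwH] by blast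
        moreover have "(w,u) \<in> (adj_in (induced_edges T' e) e)\<^sup>*" using adj_sym[of u w] uwe by blast
        ultimately show ?thesis by simp
      qed
      have reach: "(u,x) \<in> (adj_in (induced_edges T' e) e)\<^sup>*" if "x \<in> e" for x
      proof -
        have "(u,x) \<in> (adj_in (H \<union> {{u,v}}) e)\<^sup>*" using ce ue that Hs unfolding connected_graph_def by auto
        from path_split[OF this]
        have "(u,x) \<in> (adj_in H e)\<^sup>* \<or> (v,x) \<in> (adj_in H e)\<^sup>*" by auto
        then show ?thesis
        proof
          assume "(u,x) \<in> (adj_in H e)\<^sup>*" then show ?thesis using adj_mono[OF HT'] by blast
        next
          assume "(v,x) \<in> (adj_in H e)\<^sup>*"
          then have "(v,x) \<in> (adj_in (induced_edges T' e) e)\<^sup>*" using adj_mono[OF HT'] by blast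
          then show ?thesis using adj_sym[OF vu] by simp
        qed
      qed
      show ?thesis unfolding connected_graph_def using reach adj_sym by (meson rtrancl_trans)
    qed
  qed
  have "host_tree V E T'" unfolding host_tree_def tree_def
    using Vne graphT' conT' acT' hyp by simp
  then have "tree F (induced_edges T' F)" using all by simp
  then have "(u,v) \<in> (adj_in (induced_edges T' F) F)\<^sup>*" using uF vF unfolding tree_def connected_graph_def by auto
  moreover have "induced_edges T' F \<subseteq> T0" unfolding induced_edges_def T'_def using wF by auto
  ultimately have "(u,v) \<in> (adj_in T0 V)\<^sup>*" using adj_mono[OF _ FV] by blast
  then show False using notuv by simp
qed


theorem mainTheorem3:
  fixes V :: "'a set" and E :: "'a set set" and T :: "'a set set" and F :: "'a set"
  assumes "hypertree V E"
    and "host_tree V E T"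
    and "F \<subseteq> V"
    and "\<forall>T'. host_tree V E T' \<longrightarrow> tree F (induced_edges T' F)"
    and "\<not> (\<exists>x. F = {x})"
  shows "(\<forall>u v. {u, v} \<in> T \<and> {u, v} \<subseteq> F \<longrightarrow> I_H V E {u, v} \<subseteq> F)
         \<and> F = (\<Union>uv\<in>induced_edges T F. I_H V E uv)
         \<and> connected_union ((\<lambda>uv. I_H V E uv) ` induced_edges T F)"
proof -
  have hg: "hypergraph V E" using assms(1) unfolding hypertree_def by simp
  have tr: "tree V T" using assms(2) unfolding host_tree_def by simp
  have gT: "graph V T" and cT: "connected_graph V T" and aT: "acyclic_graph V T"
    using tr unfolding tree_def by auto
  have trF: "tree F (induced_edges T F)" using assms(4) assms(2) by simp
  have cF: "connected_graph F (induced_edges T F)" and Fne: "F \<noteq> {}" using trF unfolding tree_def by auto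
  have P1: "\<forall>u v. {u, v} \<in> T \<and> {u, v} \<subseteq> F \<longrightarrow> I_H V E {u, v} \<subseteq> F"
  proof (intro allI impI subsetI)
    fix u v x assume h: "{u, v} \<in> T \<and> {u, v} \<subseteq> F" and xI: "x \<in> I_H V E {u, v}"
    show "x \<in> F"
    proof (rule ccontr)
      assume xF: "x \<notin> F"
      have uv: "{u,v} \<in> T" "u \<in> F" "v \<in> F" using h by auto
      have xV: "x \<in> V" using xI I_sub[OF hg] by auto
      have uV: "u \<in> V" using uv assms(3) by auto
      have "(u,x) \<in> (adj_in (T - {{u,v}} \<union> {{u,v}}) V)\<^sup>*"
        using cT uV xV uv(1) unfolding connected_graph_def by (simp add: insert_absorb)
      from path_split[OF this]
      have "(u,x) \<in> (adj_in (T - {{u,v}}) V)\<^sup>* \<or> (v,x) \<in> (adj_in (T - {{u,v}}) V)\<^sup>*" by auto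
      then show False
      proof
        assume "(v,x) \<in> (adj_in (T - {{u,v}}) V)\<^sup>*"
        then show False using key[OF hg assms(2) assms(3) assms(4) uv xI xF] by blast
      next
        assume a: "(u,x) \<in> (adj_in (T - {{u,v}}) V)\<^sup>*"
        have e: "{v,u} = {u,v}" by (rule insert_commute)
        show False using key[of V E T F v u x] hg assms(2) assms(3) assms(4) uv xI xF a
          unfolding e by blast
      qed
    qed
  qed
  have edge: "\<And>uv. uv \<in> induced_edges T F \<Longrightarrow> \<exists>a b. uv = {a,b} \<and> a \<noteq> b \<and> a \<in> F \<and> b \<in> F"
  proof -
    fix uv assume "uv \<in> induced_edges T F"
    then have "uv \<in> T" "uv \<subseteq> F" unfolding induced_edges_def by auto
    moreover obtain a b where "uv = {a,b}" "a \<noteq> b" using gT \<open>uv \<in> T\<close> unfolding graph_def by meson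
    ultimately show "\<exists>a b. uv = {a,b} \<and> a \<noteq> b \<and> a \<in> F \<and> b \<in> F" by auto
  qed
  have P2: "F = (\<Union>uv\<in>induced_edges T F. I_H V E uv)"
  proof
    show "(\<Union>uv\<in>induced_edges T F. I_H V E uv) \<subseteq> F"
    proof
      fix x assume "x \<in> (\<Union>uv\<in>induced_edges T F. I_H V E uv)"
      then obtain uv where uv: "uv \<in> induced_edges T F" "x \<in> I_H V E uv" by auto
      then obtain a b where "uv = {a,b}" using edge by blast
      then show "x \<in> F" using P1 uv unfolding induced_edges_def by auto
    qed
  next
    show "F \<subseteq> (\<Union>uv\<in>induced_edges T F. I_H V E uv)"
    proof
      fix x assume xF: "x \<in> F"
      obtain y where yF: "y \<in> F" "y \<noteq> x" using xF assms(5) by blast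
      have "(x,y) \<in> (adj_in (induced_edges T F) F)\<^sup>*" using cF xF yF unfolding connected_graph_def by auto
      then obtain z where "(x,z) \<in> adj_in (induced_edges T F) F"
        using yF(2) by (metis converse_rtranclE)
      then have z: "{x,z} \<in> induced_edges T F" unfolding adj_in_def by auto
      have "x \<in> I_H V E {x,z}" using memI[of x "{x,z}" V E] z assms(3) unfolding induced_edges_def by auto
      then show "x \<in> (\<Union>uv\<in>induced_edges T F. I_H V E uv)" using z by blast
    qed
  qed
  have P3: "connected_union ((\<lambda>uv. I_H V E uv) ` induced_edges T F)"
    unfolding connected_union_def
  proof (intro ballI)
    let ?S = "(\<lambda>uv. I_H V E uv) ` induced_edges T F"
    let ?R = "{(X, Y). X \<in> ?S \<and> Y \<in> ?S \<and> X \<inter> Y \<noteq> {}}"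
    fix A B assume A: "A \<in> ?S" and B: "B \<in> ?S"
    obtain e1 where e1: "e1 \<in> induced_edges T F" "A = I_H V E e1" using A by auto
    obtain e2 where e2: "e2 \<in> induced_edges T F" "B = I_H V E e2" using B by auto
    obtain a b where ab: "e1 = {a,b}" "a \<in> F" using edge[OF e1(1)] by blast
    obtain c d where cd: "e2 = {c,d}" "c \<in> F" using edge[OF e2(1)] by blast
    have inI: "\<And>x e. e \<in> induced_edges T F \<Longrightarrow> x \<in> e \<Longrightarrow> x \<in> I_H V E e"
    proof -
      fix x e assume h: "e \<in> induced_edges T F" "x \<in> e"
      have "e \<subseteq> V" using h(1) assms(3) unfolding induced_edges_def by auto
      then show "x \<in> I_H V E e" by (rule memI[OF h(2)])
    qed
    have main: "\<forall>e\<in>induced_edges T F. z \<in> e \<longrightarrow> (A, I_H V E e) \<in> ?R\<^sup>*"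
      if "(a,z) \<in> (adj_in (induced_edges T F) F)\<^sup>*" for z
      using that
    proof (induction rule: rtrancl_induct)
      case base
      show ?case
      proof (intro ballI impI)
        fix e assume "e \<in> induced_edges T F" "a \<in> e"
        then have "(A, I_H V E e) \<in> ?R" using e1 ab inI[of e1 a] inI[of e a] by auto
        then show "(A, I_H V E e) \<in> ?R\<^sup>*" by blast
      qed
    next
      case (step y z)
      have yz: "{y,z} \<in> induced_edges T F" using step(2) unfolding adj_in_def by auto
      have h: "(A, I_H V E {y,z}) \<in> ?R\<^sup>*" using step(3) yz by auto
      show ?case
      proof (intro ballI impI)
        fix e assume "e \<in> induced_edges T F" "z \<in> e"
        then have "(I_H V E {y,z}, I_H V E e) \<in> ?R" using yz inI[of "{y,z}" z] inI[of e z] by auto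
        then show "(A, I_H V E e) \<in> ?R\<^sup>*" using h by (meson rtrancl_into_rtrancl)
      qed
    qed
    have "(a,c) \<in> (adj_in (induced_edges T F) F)\<^sup>*" using cF ab cd unfolding connected_graph_def by auto
    from main[OF this] show "(A, B) \<in> ?R\<^sup>*" using e2 cd by auto
  qed
  show ?thesis using P1 P2 P3 by blast
qed

end
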